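(* Let $\mathbb{M}$ be a weight sequence with sequence of quotients $\mathbf{m}$. The following are equivalent: (i) $0<\liminf_{t\to\infty}\frac{\nu_{\mathbf{m}}(t)}{\omega_{\mathbb{M}}(t)}\le\limsup_{t\to\infty}\frac{\nu_{\mathbf{m}}(t)}{\omega_{\mathbb{M}}(t)}<\infty$; (ii) $\beta(\nu_{\mathbf{m}})>0$ and $\alpha(\nu_{\mathbf{m}})<\infty$; (iii) $\beta(\omega_{\mathbb{M}})>0$ and $\alpha(\omega_{\mathbb{M}})<\infty$. In this case, $\beta(\omega_{\mathbb{M}})=\beta(\nu_{\mathbf{m}})$ and $\alpha(\omega_{\mathbb{M}})=\alpha(\nu_{\mathbf{m}})$.
   Context: A weight sequence is $\mathbb{M}=(M_p)_{p\in\mathbb{N}_0}$ of positive reals with $M_0=1$, $M_p^2\le M_{p-1}M_{p+1}$ ($p\ge1$) and $M_p^{1/p}\to\infty$; $m_p=M_{p+1}/M_p$. $\omega_{\mathbb{M}}(t):=\sup_{p\in\mathbb{N}_0}\log(t^p/M_p)$ for $t>0$, $\omega_{\mathbb{M}}(0)=0$; $\nu_{\mathbf{m}}(t):=\#\{j\in\mathbb{N}_0:m_j\le t\}$ for $t>0$. For a positive measurable $f$ on $[A,\infty)$: $\alpha(f):=\inf\{\alpha:\exists C_\alpha>0\ \forall\Lambda>1,\ \limsup_{x\to\infty}\sup_{\lambda\in[1,\Lambda]}\frac{f(\lambda x)}{\lambda^{\alpha}f(x)}\le C_\alpha\}$ and $\beta(f):=\sup\{\beta:\exists D_\beta>0\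 \forall\Lambda>1,\ \liminf_{x\to\infty}\inf_{\lambda\in[1,\Lambda]}\frac{f(\lambda x)}{\lambda^{\beta}f(x)}\ge D_\beta\}$; for $\omega_{\mathbb{M}}$, $\nu_{\mathbf{m}}$ they are computed on any $[A,\infty)$, $A>0$, where the function is positive. *)

theory Defs
  imports "HOL-Analysis.Analysis"
begin

definition weight_sequence :: "(nat \<Rightarrow> real) \<Rightarrow> bool" where
  "weight_sequence M \<longleftrightarrow>
     M 0 = 1 \<and> (\<forall>p. M p > 0) \<and>
     (\<forall>p\<ge>1. (M p)^2 \<le> M (p - 1) * M (p + 1)) \<and>
     filterlim (\<lambda>p. M p powr (1 / real p)) at_top sequentially"

definition quotients :: "(nat \<Rightarrow> real) \<Rightarrow> nat \<Rightarrow> real" where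
  "quotients M p = M (Suc p) / M p"

definition omegaM :: "(nat \<Rightarrow> real) \<Rightarrow> real \<Rightarrow> real" where
  "omegaM M t = (if t > 0 then (SUP p. ln (t ^ p / M p)) else 0)"

definition nu_m :: "(nat \<Rightarrow> real) \<Rightarrow> real \<Rightarrow> real" where
  "nu_m m t = (if t > 0 then real (card {j. m j \<le> t}) else 0)"

text \<open>Only the behaviour as x tends to infinity
  matters, so the choice of the interval [A,infinity) is immaterial; they take values in
  the extended reals (Inf of the empty set is infinity, Sup of the empty set is -infinity).\<close>
definition alpha_idx :: "(real \<Rightarrow> real) \<Rightarrow> ereal" where
  "alpha_idx f = Inf {ereal a | a. \<exists>C>0. \<forall>\<Lambda>>1.
      Limsup at_top (\<lambda>x. SUP l\<in>{1..\<Lambda>}. ereal (f (l * x) / (l powr a * f x))) \<le> ereal C}"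

definition beta_idx :: "(real \<Rightarrow> real) \<Rightarrow> ereal" where
  "beta_idx f = Sup {ereal b | b. \<exists>D>0. \<forall>\<Lambda>>1.
      Liminf at_top (\<lambda>x. INF l\<in>{1..\<Lambda>}. ereal (f (l * x) / (l powr b * f x))) \<ge> ereal D}"

end

theory Submission
  imports Defs
begin


definition LL :: "(nat \<Rightarrow> real) \<Rightarrow> nat \<Rightarrow> real \<Rightarrow> real" where
  "LL M p t = real p * ln t - ln (M p)"

context
  fixes M :: "nat \<Rightarrow> real"
  assumes ws: "weight_sequence M"
begin

lemma M_pos: "M p > 0"
  using ws unfolding weight_sequence_def by auto

lemma M0: "M 0 = 1"
  using ws unfolding weight_sequence_def by auto

lemma q_pos: "quotients M p > 0"
  using M_pos unfolding quotients_def by simp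

lemma M_Suc: "M (Suc p) = quotients M p * M p"
  using M_pos[of p] unfolding quotients_def by simp

lemma q_mono_Suc: "quotients M p \<le> quotients M (Suc p)"
proof -
  have "\<forall>p\<ge>1. (M p)^2 \<le> M (p - 1) * M (p + 1)"
    using ws unfolding weight_sequence_def by blast
  hence "(M (Suc p))^2 \<le> M (Suc p - 1) * M (Suc p + 1)"
    by (metis le_add1 plus_1_eq_Suc)
  hence h: "M (Suc p) * M (Suc p) \<le> M p * M (Suc (Suc p))"
    by (simp add: power2_eq_square)
  have a: "M p > 0" "M (Suc p) > 0" using M_pos by auto
  show ?thesis unfolding quotients_def
    using h a by (simp add: divide_simps mult.commute)
qed

lemma q_mono: "i \<le> j \<Longrightarrow> quotients M i \<le> quotients M j"
  using lift_Suc_mono_le[of "quotients M", OF q_mono_Suc] by blast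

lemma q_unbounded: "\<exists>j. quotients M j > t"
proof (rule ccontr)
  assume "\<not> ?thesis"
  hence b: "\<And>j. quotients M j \<le> t" by (meson not_le)
  have tpos: "t > 0" using b[of 0] q_pos[of 0] by linarith
  have Mle: "M p \<le> t ^ p" for p
  proof (induction p)
    case 0 then show ?case using M0 by simp
  next
    case (Suc p)
    have "M (Suc p) = quotients M p * M p" by (rule M_Suc)
    also have "\<dots> \<le> t * t ^ p"
      using b[of p] Suc q_pos[of p] M_pos[of p] tpos
      by (intro mult_mono) auto
    finally show ?case by simp
  qed
  have "filterlim (\<lambda>p. M p powr (1 / real p)) at_top sequentially"
    using ws unfolding weight_sequence_def by blast
  hence "eventually (\<lambda>p. M p powr (1 / real p) > t) sequentially"
    by (simp add: filterlim_at_top_dense)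
  then obtain N where N: "\<And>n. n \<ge> N \<Longrightarrow> M n powr (1 / real n) > t"
    unfolding eventually_sequentially by blast
  define p where "p = max N 1"
  have p: "M p powr (1 / real p) > t" "p \<ge> 1" using N unfolding p_def by auto
  have "M p powr (1 / real p) \<le> (t ^ p) powr (1 / real p)"
    using Mle[of p] M_pos[of p] by (intro powr_mono2) auto
  also have "\<dots> = t"
  proof -
    have "t ^ p = t powr (real p)" using tpos by (simp add: powr_realpow)
    hence "(t ^ p) powr (1 / real p) = t powr (real p * (1 / real p))" by (simp add: powr_powr)
    also have "\<dots> = t" using p(2) tpos by simp
    finally show ?thesis .
  qed
  finally show False using p(1) by simp
qed

definition NN :: "real \<Rightarrow> nat" where
  "NN t = (LEAST j. t < quotients M j)"

lemma S_eq: "{j. quotients M j \<le> t} = {..<NN t}"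
proof -
  obtain j0 where j0: "quotients M j0 > t" using q_unbounded by blast
  have L: "t < quotients M (NN t)" unfolding NN_def using j0 by (rule LeastI)
  show ?thesis
  proof (intro set_eqI iffI)
    fix j assume "j \<in> {j. quotients M j \<le> t}"
    hence "quotients M j \<le> t" by simp
    hence "\<not> NN t \<le> j" using q_mono[of "NN t" j] L by linarith
    thus "j \<in> {..<NN t}" by simp
  next
    fix j assume "j \<in> {..<NN t}"
    hence "j < NN t" by simp
    hence "\<not> t < quotients M j" unfolding NN_def by (rule not_less_Least)
    thus "j \<in> {j. quotients M j \<le> t}" by simp
  qed
qed

lemma nu_eq: "t > 0 \<Longrightarrow> nu_m (quotients M) t = real (NN t)"
  unfolding nu_m_def using S_eq by simp

lemma LL_Suc: "t > 0 \<Longrightarrow> LL M (Suc p) t = LL M p t + (ln t - ln (quotients M p))"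
  unfolding LL_def using M_Suc[of p] q_pos[of p] M_pos[of p]
  by (simp add: ln_mult algebra_simps)

lemma LL_le_NN: assumes t: "t > 0" shows "LL M p t \<le> LL M (NN t) t"
proof (cases "p \<le> NN t")
  case True
  show ?thesis using True
  proof (induction rule: dec_induct)
    case base then show ?case by simp
  next
    case (step n)
    have "n \<in> {..<NN t}" using step by simp
    hence "quotients M n \<le> t" using S_eq[of t] by blast
    hence "ln (quotients M n) \<le> ln t" using q_pos[of n] t by simp
    then show ?case using step LL_Suc[OF t, of n] by simp
  qed
next
  case False
  hence le: "NN t \<le> p" by simp
  have "LL M p t \<le> LL M (NN t) t" using le
  proof (induction rule: dec_induct)
    case base then show ?case by simp
  next
    case (step n)
    have "n \<notin> {..<NN t}" using step by simp
    hence "\<not> quotients M n \<le> t" using S_eq[of t] by blast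
    hence "quotients M n > t" by simp
    hence "ln (quotients M n) > ln t" using q_pos[of n] t by simp
    then show ?case using step LL_Suc[OF t, of n] by simp
  qed
  thus ?thesis .
qed

lemma omega_LL: "t > 0 \<Longrightarrow> omegaM M t = (SUP p. LL M p t)"
proof -
  assume t: "t > 0"
  have e: "ln (t^p / M p) = LL M p t" for p
  proof -
    have "M p > 0" by (rule M_pos)
    thus ?thesis using t by (simp add: LL_def ln_div ln_realpow)
  qed
  show ?thesis unfolding omegaM_def using t e by simp
qed

lemma omega_eq: assumes t: "t > 0" shows "omegaM M t = LL M (NN t) t"
  unfolding omega_LL[OF t]
  by (rule cSup_eq_maximum) (auto intro: LL_le_NN[OF t])

lemma omega_ge: assumes t: "t > 0" shows "LL M p t \<le> omegaM M t"
  using LL_le_NN[OF t] omega_eq[OF t] by simp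

lemma P1: assumes "0 < x" "x \<le> y"
  shows "omegaM M x + nu_m (quotients M) x * ln (y / x) \<le> omegaM M y"
proof -
  have "omegaM M x + nu_m (quotients M) x * ln (y / x) = LL M (NN x) y"
    using assms omega_eq[of x] nu_eq[of x] unfolding LL_def
    by (simp add: ln_div algebra_simps)
  also have "\<dots> \<le> omegaM M y" using assms by (intro omega_ge) auto
  finally show ?thesis .
qed

lemma P2: assumes "0 < x" "x \<le> y"
  shows "omegaM M y \<le> omegaM M x + nu_m (quotients M) y * ln (y / x)"
proof -
  have "omegaM M y - nu_m (quotients M) y * ln (y / x) = LL M (NN y) x"
    using assms omega_eq[of y] nu_eq[of y] unfolding LL_def
    by (simp add: ln_div algebra_simps)
  also have "\<dots> \<le> omegaM M x" using assms by (intro omega_ge) auto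
  finally show ?thesis by simp
qed

lemma omega_nonneg: "t > 0 \<Longrightarrow> omegaM M t \<ge> 0"
  using omega_ge[of t 0] M0 unfolding LL_def by simp

lemma omega_pos: assumes t: "t > quotients M 0" shows "omegaM M t > 0"
proof -
  have "ln (quotients M 0) < ln t" using t q_pos[of 0] by simp
  moreover have "LL M 1 t = ln t - ln (quotients M 0)"
    using M0 M_Suc[of 0] by (simp add: LL_def)
  moreover have "LL M 1 t \<le> omegaM M t" using t q_pos[of 0] by (intro omega_ge) auto
  ultimately show ?thesis by linarith
qed

lemma nu_ge1: "t \<ge> quotients M 0 \<Longrightarrow> nu_m (quotients M) t \<ge> 1"
proof -
  assume t: "t \<ge> quotients M 0"
  hence "0 \<in> {j. quotients M j \<le> t}" by simp
  hence "NN t \<ge> 1" using S_eq[of t] by auto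
  thus ?thesis using nu_eq[of t] t q_pos[of 0] by simp
qed

lemma nu_nonneg: "nu_m (quotients M) t \<ge> 0"
  unfolding nu_m_def by simp

lemma nu_mono: "0 < x \<Longrightarrow> x \<le> y \<Longrightarrow> nu_m (quotients M) x \<le> nu_m (quotients M) y"
proof -
  assume a: "0 < x" "x \<le> y"
  have "{j. quotients M j \<le> x} \<subseteq> {j. quotients M j \<le> y}" using a by auto
  hence "{..<NN x} \<subseteq> {..<NN y}" unfolding S_eq .
  hence "NN x \<le> NN y" by simp
  thus ?thesis using nu_eq[of x] nu_eq[of y] a by simp
qed

lemma omega_mono: "0 < x \<Longrightarrow> x \<le> y \<Longrightarrow> omegaM M x \<le> omegaM M y"
proof -
  assume a: "0 < x" "x \<le> y"
  have "y / x \<ge> 1" using a by simp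
  hence "ln (y / x) \<ge> 0" by simp
  hence "nu_m (quotients M) x * ln (y / x) \<ge> 0" using nu_nonneg[of x] by simp
  thus ?thesis using P1[OF a] by linarith
qed

end


definition Aok :: "(real \<Rightarrow> real) \<Rightarrow> real \<Rightarrow> bool" where
  "Aok f a \<longleftrightarrow> (\<exists>C>0. \<forall>\<Lambda>>1. \<exists>x0. \<forall>x\<ge>x0. \<forall>l\<in>{1..\<Lambda>}. f (l * x) / (l powr a * f x) \<le> C)"

definition Bok :: "(real \<Rightarrow> real) \<Rightarrow> real \<Rightarrow> bool" where
  "Bok f b \<longleftrightarrow> (\<exists>D>0. \<forall>\<Lambda>>1. \<exists>x0. \<forall>x\<ge>x0. \<forall>l\<in>{1..\<Lambda>}. f (l * x) / (l powr b * f x) \<ge> D)"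

lemma limsup_cond:
  fixes r :: "real \<Rightarrow> real \<Rightarrow> real"
  shows "(\<exists>C>0. \<forall>\<Lambda>>1. Limsup at_top (\<lambda>x. SUP l\<in>{1..\<Lambda>}. ereal (r l x)) \<le> ereal C)
     \<longleftrightarrow> (\<exists>C>0. \<forall>\<Lambda>>1. \<exists>x0. \<forall>x\<ge>x0. \<forall>l\<in>{1..\<Lambda>}. r l x \<le> C)"
proof
  assume "\<exists>C>0. \<forall>\<Lambda>>1. Limsup at_top (\<lambda>x. SUP l\<in>{1..\<Lambda>}. ereal (r l x)) \<le> ereal C"
  then obtain C where C: "C > 0" "\<forall>\<Lambda>>1. Limsup at_top (\<lambda>x. SUP l\<in>{1..\<Lambda>}. ereal (r l x)) \<le> ereal C"
    by blast
  show "\<exists>C>0. \<forall>\<Lambda>>1. \<exists>x0. \<forall>x\<ge>x0. \<forall>l\<in>{1..\<Lambda>}. r l x \<le> C"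
  proof (rule exI[of _ "C + 1"], intro conjI allI impI)
    show "C + 1 > 0" using C by simp
    fix \<Lambda> :: real assume "\<Lambda> > 1"
    hence "Limsup at_top (\<lambda>x. SUP l\<in>{1..\<Lambda>}. ereal (r l x)) \<le> ereal C"
      using C(2) by blast
    moreover have "ereal C < ereal (C + 1)" by simp
    ultimately have "Limsup at_top (\<lambda>x. SUP l\<in>{1..\<Lambda>}. ereal (r l x)) < ereal (C + 1)"
      by (rule order.strict_trans1)
    hence "eventually (\<lambda>x. (SUP l\<in>{1..\<Lambda>}. ereal (r l x)) < ereal (C + 1)) at_top"
      by (rule Limsup_lessD)
    then obtain x0 where x0: "\<And>x. x \<ge> x0 \<Longrightarrow> (SUP l\<in>{1..\<Lambda>}. ereal (r l x)) < ereal (C + 1)"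
      by (auto simp: eventually_at_top_linorder)
    show "\<exists>x0. \<forall>x\<ge>x0. \<forall>l\<in>{1..\<Lambda>}. r l x \<le> C + 1"
    proof (intro exI[of _ x0] allI impI ballI)
      fix x l assume "x \<ge> x0" "l \<in> {1..\<Lambda>}"
      hence "ereal (r l x) \<le> (SUP l\<in>{1..\<Lambda>}. ereal (r l x))" "(SUP l\<in>{1..\<Lambda>}. ereal (r l x)) < ereal (C + 1)"
        using x0 by (auto intro: SUP_upper)
      hence "ereal (r l x) < ereal (C + 1)" by (rule order.strict_trans1)
      thus "r l x \<le> C + 1" by simp
    qed
  qed
next
  assume "\<exists>C>0. \<forall>\<Lambda>>1. \<exists>x0. \<forall>x\<ge>x0. \<forall>l\<in>{1..\<Lambda>}. r l x \<le> C"
  then obtain C where C: "C > 0" "\<forall>\<Lambda>>1. \<exists>x0. \<forall>x\<ge>x0. \<forall>l\<in>{1..\<Lambda>}. r l x \<le> C" by blast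
  show "\<exists>C>0. \<forall>\<Lambda>>1. Limsup at_top (\<lambda>x. SUP l\<in>{1..\<Lambda>}. ereal (r l x)) \<le> ereal C"
  proof (rule exI[of _ C], intro conjI allI impI)
    show "C > 0" by fact
    fix \<Lambda> :: real assume "\<Lambda> > 1"
    then obtain x0 where x0: "\<forall>x\<ge>x0. \<forall>l\<in>{1..\<Lambda>}. r l x \<le> C" using C(2) by blast
    have "eventually (\<lambda>x. (SUP l\<in>{1..\<Lambda>}. ereal (r l x)) \<le> ereal C) at_top"
      unfolding eventually_at_top_linorder
      by (rule exI[of _ x0]) (use x0 in \<open>auto intro!: SUP_least\<close>)
    thus "Limsup at_top (\<lambda>x. SUP l\<in>{1..\<Lambda>}. ereal (r l x)) \<le> ereal C"
      by (rule Limsup_bounded)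
  qed
qed

lemma liminf_cond:
  fixes r :: "real \<Rightarrow> real \<Rightarrow> real"
  shows "(\<exists>D>0. \<forall>\<Lambda>>1. Liminf at_top (\<lambda>x. INF l\<in>{1..\<Lambda>}. ereal (r l x)) \<ge> ereal D)
     \<longleftrightarrow> (\<exists>D>0. \<forall>\<Lambda>>1. \<exists>x0. \<forall>x\<ge>x0. \<forall>l\<in>{1..\<Lambda>}. r l x \<ge> D)"
proof
  assume "\<exists>D>0. \<forall>\<Lambda>>1. Liminf at_top (\<lambda>x. INF l\<in>{1..\<Lambda>}. ereal (r l x)) \<ge> ereal D"
  then obtain D where D: "D > 0" "\<forall>\<Lambda>>1. Liminf at_top (\<lambda>x. INF l\<in>{1..\<Lambda>}. ereal (r l x)) \<ge> ereal D"
    by blast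
  show "\<exists>D>0. \<forall>\<Lambda>>1. \<exists>x0. \<forall>x\<ge>x0. \<forall>l\<in>{1..\<Lambda>}. r l x \<ge> D"
  proof (rule exI[of _ "D / 2"], intro conjI allI impI)
    show "D / 2 > 0" using D by simp
    fix \<Lambda> :: real assume "\<Lambda> > 1"
    hence "ereal D \<le> Liminf at_top (\<lambda>x. INF l\<in>{1..\<Lambda>}. ereal (r l x))"
      using D(2) by blast
    moreover have "ereal (D / 2) < ereal D" using D(1) by simp
    ultimately have "ereal (D / 2) < Liminf at_top (\<lambda>x. INF l\<in>{1..\<Lambda>}. ereal (r l x))"
      by (rule order.strict_trans2[rotated])
    hence "eventually (\<lambda>x. (INF l\<in>{1..\<Lambda>}. ereal (r l x)) > ereal (D / 2)) at_top"
      by (rule less_LiminfD)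
    then obtain x0 where x0: "\<And>x. x \<ge> x0 \<Longrightarrow> (INF l\<in>{1..\<Lambda>}. ereal (r l x)) > ereal (D / 2)"
      by (auto simp: eventually_at_top_linorder)
    show "\<exists>x0. \<forall>x\<ge>x0. \<forall>l\<in>{1..\<Lambda>}. r l x \<ge> D / 2"
    proof (intro exI[of _ x0] allI impI ballI)
      fix x l assume "x \<ge> x0" "l \<in> {1..\<Lambda>}"
      hence "ereal (r l x) \<ge> (INF l\<in>{1..\<Lambda>}. ereal (r l x))" "(INF l\<in>{1..\<Lambda>}. ereal (r l x)) > ereal (D / 2)"
        using x0 by (auto intro: INF_lower)
      hence "ereal (D / 2) < ereal (r l x)" by (rule order.strict_trans2[rotated])
      thus "r l x \<ge> D / 2" by simp
    qed
  qed
next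
  assume "\<exists>D>0. \<forall>\<Lambda>>1. \<exists>x0. \<forall>x\<ge>x0. \<forall>l\<in>{1..\<Lambda>}. r l x \<ge> D"
  then obtain D where D: "D > 0" "\<forall>\<Lambda>>1. \<exists>x0. \<forall>x\<ge>x0. \<forall>l\<in>{1..\<Lambda>}. r l x \<ge> D" by blast
  show "\<exists>D>0. \<forall>\<Lambda>>1. Liminf at_top (\<lambda>x. INF l\<in>{1..\<Lambda>}. ereal (r l x)) \<ge> ereal D"
  proof (rule exI[of _ D], intro conjI allI impI)
    show "D > 0" by fact
    fix \<Lambda> :: real assume "\<Lambda> > 1"
    then obtain x0 where x0: "\<forall>x\<ge>x0. \<forall>l\<in>{1..\<Lambda>}. r l x \<ge> D" using D(2) by blast
    have "eventually (\<lambda>x. (INF l\<in>{1..\<Lambda>}. ereal (r l x)) \<ge> ereal D) at_top"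
      unfolding eventually_at_top_linorder
      by (rule exI[of _ x0]) (use x0 in \<open>auto intro!: INF_greatest\<close>)
    thus "Liminf at_top (\<lambda>x. INF l\<in>{1..\<Lambda>}. ereal (r l x)) \<ge> ereal D"
      by (rule Liminf_bounded)
  qed
qed

lemma alpha_char: "alpha_idx f = Inf {ereal a | a. Aok f a}"
proof -
  have "\<And>a. (\<exists>C>0. \<forall>\<Lambda>>1.
      Limsup at_top (\<lambda>x. SUP l\<in>{1..\<Lambda>}. ereal (f (l * x) / (l powr a * f x))) \<le> ereal C) = Aok f a"
    unfolding Aok_def by (rule limsup_cond)
  thus ?thesis unfolding alpha_idx_def by simp
qed

lemma beta_char: "beta_idx f = Sup {ereal b | b. Bok f b}"
proof -
  have "\<And>b. (\<exists>D>0. \<forall>\<Lambda>>1.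
      Liminf at_top (\<lambda>x. INF l\<in>{1..\<Lambda>}. ereal (f (l * x) / (l powr b * f x))) \<ge> ereal D) = Bok f b"
    unfolding Bok_def by (rule liminf_cond)
  thus ?thesis unfolding beta_idx_def by simp
qed

lemma alpha_fin: "alpha_idx f < \<infinity> \<longleftrightarrow> (\<exists>a. Aok f a)"
  unfolding alpha_char Inf_less_iff by auto

lemma beta_pos: "beta_idx f > 0 \<longleftrightarrow> (\<exists>b>0. Bok f b)"
  unfolding beta_char less_Sup_iff by auto



lemma transferA:
  assumes c: "c > 0" and C: "C > 0"
    and h: "\<forall>x\<ge>x0. c * g x \<le> f x \<and> f x \<le> C * g x \<and> g x > 0"
    and A: "Aok g a"
  shows "Aok f a"
proof -
  obtain K where K: "K > 0" "\<forall>\<Lambda>>1. \<exists>x1. \<forall>x\<ge>x1. \<forall>l\<in>{1..\<Lambda>}. g (l * x) / (l powr a * g x) \<le> K"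
    using A unfolding Aok_def by blast
  show ?thesis unfolding Aok_def
  proof (rule exI[of _ "C / c * K"], intro conjI allI impI)
    show "C / c * K > 0" using c C K by simp
    fix \<Lambda> :: real assume "\<Lambda> > 1"
    then obtain x1 where x1: "\<forall>x\<ge>x1. \<forall>l\<in>{1..\<Lambda>}. g (l * x) / (l powr a * g x) \<le> K"
      using K(2) by blast
    show "\<exists>x0. \<forall>x\<ge>x0. \<forall>l\<in>{1..\<Lambda>}. f (l * x) / (l powr a * f x) \<le> C / c * K"
    proof (intro exI[of _ "max (max x0 x1) 0"] allI impI ballI)
      fix x l assume x: "x \<ge> max (max x0 x1) 0" and l: "l \<in> {1..\<Lambda>}"
      have l1: "l \<ge> 1" using l by simp
      have "l * x \<ge> x" using x l1 by (simp add: mult_le_cancel_right1)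
      hence lx: "l * x \<ge> x0" using x by simp
      have hx: "c * g x \<le> f x" "g x > 0" using h x by auto
      have hlx: "f (l * x) \<le> C * g (l * x)" "g (l * x) > 0" using h lx by auto
      have lp: "l powr a > 0" using l1 by simp
      have "f (l * x) / (l powr a * f x) \<le> (C * g (l * x)) / (l powr a * (c * g x))"
        using hx hlx lp c C by (intro frac_le mult_left_mono mult_pos_pos) auto
      also have "\<dots> = C / c * (g (l * x) / (l powr a * g x))"
        using c hx lp by (simp add: field_simps)
      also have "\<dots> \<le> C / c * K"
        using x1 x l c C by (intro mult_left_mono) auto
      finally show "f (l * x) / (l powr a * f x) \<le> C / c * K" .
    qed
  qed
qed

lemma transferB:
  assumes c: "c > 0" and C: "C > 0"
    and h: "\<forall>x\<ge>x0. c * g x \<le> f x \<and> f x \<le> C * g x \<and> g x > 0"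
    and B: "Bok g b"
  shows "Bok f b"
proof -
  obtain K where K: "K > 0" "\<forall>\<Lambda>>1. \<exists>x1. \<forall>x\<ge>x1. \<forall>l\<in>{1..\<Lambda>}. g (l * x) / (l powr b * g x) \<ge> K"
    using B unfolding Bok_def by blast
  show ?thesis unfolding Bok_def
  proof (rule exI[of _ "c / C * K"], intro conjI allI impI)
    show "c / C * K > 0" using c C K by simp
    fix \<Lambda> :: real assume "\<Lambda> > 1"
    then obtain x1 where x1: "\<forall>x\<ge>x1. \<forall>l\<in>{1..\<Lambda>}. g (l * x) / (l powr b * g x) \<ge> K"
      using K(2) by blast
    show "\<exists>x0. \<forall>x\<ge>x0. \<forall>l\<in>{1..\<Lambda>}. f (l * x) / (l powr b * f x) \<ge> c / C * K"
    proof (intro exI[of _ "max (max x0 x1) 0"] allI impI ballI)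
      fix x l assume x: "x \<ge> max (max x0 x1) 0" and l: "l \<in> {1..\<Lambda>}"
      have l1: "l \<ge> 1" using l by simp
      have "l * x \<ge> x" using x l1 by (simp add: mult_le_cancel_right1)
      hence lx: "l * x \<ge> x0" using x by simp
      have hx: "f x \<le> C * g x" "g x > 0" "c * g x \<le> f x" using h x by auto
      have hlx: "c * g (l * x) \<le> f (l * x)" "g (l * x) > 0" using h lx by auto
      have fx: "f x > 0" using hx c by (smt (verit) mult_pos_pos)
      have flx: "f (l * x) \<ge> 0" using hlx c by (smt (verit) mult_pos_pos)
      have lp: "l powr b > 0" using l1 by simp
      have "c / C * K \<le> c / C * (g (l * x) / (l powr b * g x))"
        using x1 x l c C by (intro mult_left_mono) auto
      also have "\<dots> = (c * g (l * x)) / (l powr b * (C * g x))"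
        using C hx lp by (simp add: field_simps)
      also have "\<dots> \<le> f (l * x) / (l powr b * f x)"
        using hx hlx lp c C fx flx by (intro frac_le mult_left_mono mult_pos_pos) auto
      finally show "f (l * x) / (l powr b * f x) \<ge> c / C * K" .
    qed
  qed
qed

lemma index_eq:
  assumes c: "c > 0" and C: "C > 0"
    and h: "\<forall>x\<ge>x0. c * g x \<le> f x \<and> f x \<le> C * g x \<and> g x > 0"
  shows "alpha_idx f = alpha_idx g \<and> beta_idx f = beta_idx g"
proof -
  have h': "\<forall>x\<ge>x0. (1 / C) * f x \<le> g x \<and> g x \<le> (1 / c) * f x \<and> f x > 0"
  proof (intro allI impI)
    fix x assume "x \<ge> x0"
    hence a: "c * g x \<le> f x" "f x \<le> C * g x" "g x > 0" using h by auto
    have "f x > 0" using a c by (smt (verit) mult_pos_pos)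
    thus "(1 / C) * f x \<le> g x \<and> g x \<le> (1 / c) * f x \<and> f x > 0"
      using a c C by (simp add: field_simps mult.commute)
  qed
  have c': "1 / C > 0" "1 / c > 0" using c C by auto
  have "\<And>a. Aok f a \<longleftrightarrow> Aok g a"
    using transferA[OF c C h] transferA[OF c' h'] by blast
  moreover have "\<And>b. Bok f b \<longleftrightarrow> Bok g b"
    using transferB[OF c C h] transferB[OF c' h'] by blast
  ultimately show ?thesis unfolding alpha_char beta_char by simp
qed

lemma pow_bracket:
  fixes lam l :: real
  assumes "lam > 1" "l \<ge> 1"
  shows "\<exists>n. lam ^ n \<le> l \<and> l < lam ^ Suc n"
proof -
  have ex: "\<exists>k. l < lam ^ k" using real_arch_pow[OF assms(1)] by blast
  define k where "k = (LEAST k. l < lam ^ k)"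
  have k: "l < lam ^ k" unfolding k_def using ex by (rule LeastI_ex)
  have "k \<noteq> 0"
  proof
    assume "k = 0" with k assms show False by simp
  qed
  then obtain n where n: "k = Suc n" by (cases k) auto
  have "\<not> l < lam ^ n" unfolding k_def
    using n not_less_Least[of n "\<lambda>k. l < lam ^ k"] k_def by auto
  thus ?thesis using k n by (auto simp: not_less)
qed

lemma powr_pow_two:
  fixes lam :: real
  assumes "lam > 1"
  shows "(lam ^ n) powr (ln 2 / ln lam) = 2 ^ n"
proof -
  have l0: "ln lam > 0" using assms by simp
  have "lam powr (ln 2 / ln lam) = 2"
    using assms l0 by (simp add: powr_def)
  moreover have "(lam ^ n) powr (ln 2 / ln lam) = (lam powr (ln 2 / ln lam)) ^ n"
    using assms by (simp add: powr_realpow[symmetric] powr_powr powr_power mult.commute)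
  ultimately show ?thesis by simp
qed

lemma iter_up:
  fixes h :: "real \<Rightarrow> real" and lam x0 :: real
  assumes lam: "lam > 1" and x0: "x0 > 0"
    and mono: "\<forall>x y. x0 \<le> x \<longrightarrow> x \<le> y \<longrightarrow> h x \<le> h y"
    and pos: "\<forall>x\<ge>x0. h x > 0"
    and st: "\<forall>x\<ge>x0. h (lam * x) \<le> 2 * h x"
  shows "\<forall>x\<ge>x0. \<forall>l\<ge>1. h (l * x) \<le> 2 * l powr (ln 2 / ln lam) * h x"
proof (intro allI impI)
  fix x l :: real assume x: "x \<ge> x0" and l: "l \<ge> 1"
  have it: "h (lam ^ n * x) \<le> 2 ^ n * h x" for n
  proof (induction n)
    case 0 then show ?case by simp
  next
    case (Suc n)
    have "lam ^ n \<ge> 1" using lam by simp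
    hence "lam ^ n * x \<ge> x" using x x0 by (simp add: mult_le_cancel_right1)
    hence "h (lam * (lam ^ n * x)) \<le> 2 * h (lam ^ n * x)" using st x by auto
    also have "\<dots> \<le> 2 * (2 ^ n * h x)" using Suc by simp
    finally show ?case by (simp add: mult.assoc)
  qed
  obtain n where n: "lam ^ n \<le> l" "l < lam ^ Suc n" using pow_bracket[OF lam l] by blast
  have "l * x \<ge> x" using x x0 l by (simp add: mult_le_cancel_right1)
  hence "h (l * x) \<le> h (lam ^ Suc n * x)"
    using mono x x0 n by (smt (verit) mult_right_mono)
  also have "\<dots> \<le> 2 ^ Suc n * h x" by (rule it)
  also have "\<dots> = 2 * (lam ^ n) powr (ln 2 / ln lam) * h x"
    using powr_pow_two[OF lam] by simp
  also have "\<dots> \<le> 2 * l powr (ln 2 / ln lam) * h x"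
  proof -
    have "(lam ^ n) powr (ln 2 / ln lam) \<le> l powr (ln 2 / ln lam)"
      using n lam by (intro powr_mono2) auto
    thus ?thesis using pos x by (intro mult_right_mono) auto
  qed
  finally show "h (l * x) \<le> 2 * l powr (ln 2 / ln lam) * h x" .
qed

lemma iter_down:
  fixes h :: "real \<Rightarrow> real" and lam x0 :: real
  assumes lam: "lam > 1" and x0: "x0 > 0"
    and mono: "\<forall>x y. x0 \<le> x \<longrightarrow> x \<le> y \<longrightarrow> h x \<le> h y"
    and pos: "\<forall>x\<ge>x0. h x > 0"
    and st: "\<forall>x\<ge>x0. h (lam * x) \<ge> 2 * h x"
  shows "\<forall>x\<ge>x0. \<forall>l\<ge>1. h (l * x) \<ge> l powr (ln 2 / ln lam) * h x / 2"
proof (intro allI impI)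
  fix x l :: real assume x: "x \<ge> x0" and l: "l \<ge> 1"
  have it: "h (lam ^ n * x) \<ge> 2 ^ n * h x" for n
  proof (induction n)
    case 0 then show ?case by simp
  next
    case (Suc n)
    have "lam ^ n \<ge> 1" using lam by simp
    hence "lam ^ n * x \<ge> x" using x x0 by (simp add: mult_le_cancel_right1)
    hence "h (lam * (lam ^ n * x)) \<ge> 2 * h (lam ^ n * x)" using st x by auto
    moreover have "2 * h (lam ^ n * x) \<ge> 2 * (2 ^ n * h x)" using Suc by simp
    ultimately show ?case by (simp add: mult.assoc)
  qed
  obtain n where n: "lam ^ n \<le> l" "l < lam ^ Suc n" using pow_bracket[OF lam l] by blast
  have "l powr (ln 2 / ln lam) * h x / 2 \<le> (lam ^ Suc n) powr (ln 2 / ln lam) * h x / 2"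
  proof -
    have "l powr (ln 2 / ln lam) \<le> (lam ^ Suc n) powr (ln 2 / ln lam)"
      using n lam l by (intro powr_mono2) auto
    thus ?thesis using pos x by (intro divide_right_mono mult_right_mono) auto
  qed
  also have "\<dots> = 2 ^ n * h x"
    using powr_pow_two[OF lam, of "Suc n"] by simp
  also have "\<dots> \<le> h (lam ^ n * x)" by (rule it)
  also have "\<dots> \<le> h (l * x)"
  proof -
    have "lam ^ n \<ge> 1" using lam by simp
    hence "lam ^ n * x \<ge> x" using x x0 by (simp add: mult_le_cancel_right1)
    moreover have "lam ^ n * x \<le> l * x" using n x x0 by (intro mult_right_mono) auto
    ultimately show ?thesis using mono x by (meson order_trans)
  qed
  finally show "h (l * x) \<ge> l powr (ln 2 / ln lam) * h x / 2" .
qed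

lemma choose_lam:
  fixes D b :: real
  assumes D: "D > 0" and b: "b > 0"
  shows "\<exists>lam. lam > 1 \<and> D * lam powr b \<ge> 2"
proof -
  define lam where "lam = max 2 ((2 / D) powr (1 / b))"
  have "lam > 1" unfolding lam_def by simp
  moreover have "lam powr b \<ge> ((2 / D) powr (1 / b)) powr b"
    unfolding lam_def using b D by (intro powr_mono2) auto
  moreover have "((2 / D) powr (1 / b)) powr b = 2 / D"
    using b D by (simp add: powr_powr)
  ultimately have "lam > 1" "lam powr b \<ge> 2 / D" by auto
  moreover have "D * lam powr b \<ge> D * (2 / D)"
    using calculation(2) D by (intro mult_left_mono) auto
  ultimately show ?thesis using D by auto
qed



context
  fixes f g :: "real \<Rightarrow> real" and X0 :: real
  assumes X0: "X0 > 0"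
    and fpos: "\<forall>x\<ge>X0. f x > 0" and gpos: "\<forall>x\<ge>X0. g x > 0"
    and fnn: "\<forall>x>0. f x \<ge> 0" and gnn: "\<forall>x>0. g x \<ge> 0"
    and fmono: "\<forall>x y. 0 < x \<longrightarrow> x \<le> y \<longrightarrow> f x \<le> f y"
    and gmono: "\<forall>x y. 0 < x \<longrightarrow> x \<le> y \<longrightarrow> g x \<le> g y"
    and P1: "\<forall>x y. 0 < x \<longrightarrow> x \<le> y \<longrightarrow> g x + f x * ln (y / x) \<le> g y"
    and P2: "\<forall>x y. 0 < x \<longrightarrow> x \<le> y \<longrightarrow> g y \<le> g x + f y * ln (y / x)"
begin

lemma E_III:
  assumes "\<exists>c>0. \<exists>C>0. \<exists>x0. \<forall>x\<ge>x0. c * g x \<le> f x \<and> f x \<le> C * g x"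
  shows "(\<exists>a. Aok g a) \<and> (\<exists>b>0. Bok g b)"
proof -
  obtain c C x0 where c: "c > 0" and C: "C > 0" and h: "\<forall>x\<ge>x0. c * g x \<le> f x \<and> f x \<le> C * g x"
    using assms by blast
  define x1 where "x1 = max x0 X0"
  have x1: "x1 > 0" "x1 \<ge> x0" "x1 \<ge> X0" using X0 unfolding x1_def by auto
  have mono1: "\<forall>x y. x1 \<le> x \<longrightarrow> x \<le> y \<longrightarrow> g x \<le> g y" using gmono x1 by auto
  have pos1: "\<forall>x\<ge>x1. g x > 0" using gpos x1 by auto
  define lam where "lam = exp (1 / (2 * C))"
  have lam: "lam > 1" "ln lam = 1 / (2 * C)" unfolding lam_def using C by auto
  have stu: "\<forall>x\<ge>x1. g (lam * x) \<le> 2 * g x"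
  proof (intro allI impI)
    fix x assume x: "x \<ge> x1"
    have lx: "lam * x \<ge> x" using lam x x1 by (simp add: mult_le_cancel_right1)
    have e: "lam * x / x = lam" using x x1 by simp
    have s1: "g (lam * x) \<le> g x + f (lam * x) * ln lam"
      using P2[rule_format, of x "lam * x"] e x x1 lx by simp
    have lx0: "lam * x \<ge> x0" using lx x x1 by linarith
    have "f (lam * x) \<le> C * g (lam * x)" using h lx0 by blast
    hence "f (lam * x) * ln lam \<le> C * g (lam * x) * ln lam"
      using lam C by (intro mult_right_mono) auto
    moreover have "C * g (lam * x) * ln lam = g (lam * x) / 2" using lam(2) C by (simp add: field_simps)
    ultimately have "g x + f (lam * x) * ln lam \<le> g x + g (lam * x) / 2"
      by linarith
    thus "g (lam * x) \<le> 2 * g x" using s1 by simp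
  qed
  have up: "\<forall>x\<ge>x1. \<forall>l\<ge>1. g (l * x) \<le> 2 * l powr (ln 2 / ln lam) * g x"
    by (rule iter_up[OF lam(1) x1(1) mono1 pos1 stu])
  have A: "Aok g (ln 2 / ln lam)" unfolding Aok_def
  proof (rule exI[of _ 2], intro conjI allI impI)
    fix \<Lambda> :: real assume "\<Lambda> > 1"
    show "\<exists>x0. \<forall>x\<ge>x0. \<forall>l\<in>{1..\<Lambda>}. g (l * x) / (l powr (ln 2 / ln lam) * g x) \<le> 2"
    proof (intro exI[of _ x1] allI impI ballI)
      fix x l assume x: "x \<ge> x1" and l: "l \<in> {1..\<Lambda>}"
      have "g x > 0" "l powr (ln 2 / ln lam) > 0" using pos1 x l by auto
      hence P: "l powr (ln 2 / ln lam) * g x > 0" by simp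
      have u: "g (l * x) \<le> 2 * l powr (ln 2 / ln lam) * g x" using up x l by simp
      show "g (l * x) / (l powr (ln 2 / ln lam) * g x) \<le> 2"
        using u by (subst pos_divide_le_eq[OF P]) (simp add: mult.assoc)
    qed
  qed simp
  define mu where "mu = exp (1 / c)"
  have mu: "mu > 1" "ln mu = 1 / c" unfolding mu_def using c by auto
  have std: "\<forall>x\<ge>x1. g (mu * x) \<ge> 2 * g x"
  proof (intro allI impI)
    fix x assume x: "x \<ge> x1"
    have lx: "mu * x \<ge> x" using mu x x1 by (simp add: mult_le_cancel_right1)
    have e: "mu * x / x = mu" using x x1 by simp
    have s1: "g x + f x * ln mu \<le> g (mu * x)"
      using P1[rule_format, of x "mu * x"] e x x1 lx by simp
    have "c * g x \<le> f x" using h x x1 by auto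
    hence "c * g x * ln mu \<le> f x * ln mu"
      using mu c by (intro mult_right_mono) auto
    moreover have "c * g x * ln mu = g x" using mu(2) c by (simp add: field_simps)
    ultimately have "g x \<le> f x * ln mu" by linarith
    thus "g (mu * x) \<ge> 2 * g x" using s1 by simp
  qed
  have down: "\<forall>x\<ge>x1. \<forall>l\<ge>1. g (l * x) \<ge> l powr (ln 2 / ln mu) * g x / 2"
    by (rule iter_down[OF mu(1) x1(1) mono1 pos1 std])
  have B: "Bok g (ln 2 / ln mu)" unfolding Bok_def
  proof (rule exI[of _ "1/2"], intro conjI allI impI)
    fix \<Lambda> :: real assume "\<Lambda> > 1"
    show "\<exists>x0. \<forall>x\<ge>x0. \<forall>l\<in>{1..\<Lambda>}. g (l * x) / (l powr (ln 2 / ln mu) * g x) \<ge> 1/2"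
    proof (intro exI[of _ x1] allI impI ballI)
      fix x l assume x: "x \<ge> x1" and l: "l \<in> {1..\<Lambda>}"
      have "g x > 0" "l powr (ln 2 / ln mu) > 0" using pos1 x l by auto
      hence P: "l powr (ln 2 / ln mu) * g x > 0" by simp
      have u: "g (l * x) \<ge> l powr (ln 2 / ln mu) * g x / 2" using down x l by simp
      show "g (l * x) / (l powr (ln 2 / ln mu) * g x) \<ge> 1/2"
        using u by (subst pos_le_divide_eq[OF P]) simp
    qed
  qed simp
  have "ln 2 / ln mu > 0" using mu c by simp
  thus ?thesis using A B by blast
qed

lemma III_E:
  assumes A: "Aok g a" and B: "Bok g b" and b: "b > 0"
  shows "\<exists>c>0. \<exists>C>0. \<exists>x0. \<forall>x\<ge>x0. c * g x \<le> f x \<and> f x \<le> C * g x"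
proof -
  obtain K where K: "K > 0" "\<forall>\<Lambda>>1. \<exists>x1. \<forall>x\<ge>x1. \<forall>l\<in>{1..\<Lambda>}. g (l * x) / (l powr a * g x) \<le> K"
    using A unfolding Aok_def by blast
  obtain x1 where x1: "\<forall>x\<ge>x1. \<forall>l\<in>{1..exp 1}. g (l * x) / (l powr a * g x) \<le> K"
    using K(2) by (meson one_less_exp_iff zero_less_one)
  obtain D where D: "D > 0" "\<forall>\<Lambda>>1. \<exists>x1. \<forall>x\<ge>x1. \<forall>l\<in>{1..\<Lambda>}. g (l * x) / (l powr b * g x) \<ge> D"
    using B unfolding Bok_def by blast
  obtain lam where lam: "lam > 1" "D * lam powr b \<ge> 2" using choose_lam[OF D(1) b] by blast
  obtain x2 where x2: "\<forall>x\<ge>x2. \<forall>l\<in>{1..lam}. g (l * x) / (l powr b * g x) \<ge> D"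
    using D(2) lam(1) by blast
  define z where "z = max (max x1 x2) X0"
  have z: "z > 0" "z \<ge> x1" "z \<ge> x2" "z \<ge> X0" unfolding z_def using X0 by auto
  have upper: "f x \<le> K * exp 1 powr a * g x" if x: "x \<ge> z" for x
  proof -
    have gx: "g x > 0" using gpos x z by auto
    have ex: "exp 1 * x \<ge> x" using x z by (simp add: mult_le_cancel_right1)
    have e: "exp 1 * x / x = exp 1" using x z by simp
    have s1: "g x + f x \<le> g (exp 1 * x)"
      using P1[rule_format, of x "exp 1 * x"] e x z ex by simp
    have "g (exp 1 * x) / (exp 1 powr a * g x) \<le> K" using x1 x z by auto
    hence "g (exp 1 * x) \<le> K * (exp 1 powr a * g x)"
      using gx by (simp add: pos_divide_le_eq)
    thus ?thesis using s1 gx by simp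
  qed
  have lower: "g x \<le> 2 * ln lam * f x" if x: "x \<ge> lam * z" for x
  proof -
    define y where "y = x / lam"
    have y: "y \<ge> z" unfolding y_def using x lam by (simp add: pos_le_divide_eq mult.commute)
    have xy: "x = lam * y" unfolding y_def using lam by simp
    have gy: "g y > 0" using gpos y z by auto
    have "g (lam * y) / (lam powr b * g y) \<ge> D" using x2 y z lam by auto
    hence "D * (lam powr b * g y) \<le> g (lam * y)"
      using gy lam by (simp add: pos_le_divide_eq)
    moreover have "2 * g y \<le> D * lam powr b * g y" using lam gy by (intro mult_right_mono) auto
    ultimately have s2: "2 * g y \<le> g x" using xy by (simp add: mult.assoc)
    have "y \<le> x" using xy y z lam by (simp add: mult_le_cancel_right1)
    moreover have e: "x / y = lam" using xy y z by simp
    ultimately have "g x \<le> g y + f x * ln lam" using P2[rule_format, of y x] y z by simp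
    hence "g x \<le> 2 * (f x * ln lam)" using s2 by linarith
    thus ?thesis by (simp add: mult_ac)
  qed
  have lpos: "ln lam > 0" using lam by simp
  have H: "\<forall>x\<ge>lam * z. 1 / (2 * ln lam) * g x \<le> f x \<and> f x \<le> K * exp 1 powr a * g x"
  proof (intro allI impI conjI)
    fix x assume x: "x \<ge> lam * z"
    have "z \<le> lam * z" using z lam by (simp add: mult_le_cancel_right1)
    hence xz: "x \<ge> z" using x by linarith
    show "f x \<le> K * exp 1 powr a * g x" using upper xz by blast
    show "1 / (2 * ln lam) * g x \<le> f x"
    proof -
      have "g x / (2 * ln lam) \<le> f x" using lower[OF x] lpos by (simp add: pos_divide_le_eq mult_ac)
      thus ?thesis by simp
    qed
  qed
  have p1: "1 / (2 * ln lam) > 0" using lpos by simp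
  have p2: "K * exp 1 powr a > 0" using K by simp
  show ?thesis
    by (rule exI[of _ "1 / (2 * ln lam)"], rule conjI[OF p1], rule exI[of _ "K * exp 1 powr a"],
        rule conjI[OF p2], rule exI[of _ "lam * z"], rule H)
qed

end


context
  fixes f g :: "real \<Rightarrow> real" and X0 :: real
  assumes X0: "X0 > 0"
    and fpos: "\<forall>x\<ge>X0. f x > 0" and gpos: "\<forall>x\<ge>X0. g x > 0"
    and fnn: "\<forall>x>0. f x \<ge> 0" and gnn: "\<forall>x>0. g x \<ge> 0"
    and fmono: "\<forall>x y. 0 < x \<longrightarrow> x \<le> y \<longrightarrow> f x \<le> f y"
    and gmono: "\<forall>x y. 0 < x \<longrightarrow> x \<le> y \<longrightarrow> g x \<le> g y"
    and P1: "\<forall>x y. 0 < x \<longrightarrow> x \<le> y \<longrightarrow> g x + f x * ln (y / x) \<le> g y"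
    and P2: "\<forall>x y. 0 < x \<longrightarrow> x \<le> y \<longrightarrow> g y \<le> g x + f y * ln (y / x)"
begin

lemma II_E:
  assumes A: "Aok f a" and B: "Bok f b" and b: "b > 0"
  shows "\<exists>c>0. \<exists>C>0. \<exists>x0. \<forall>x\<ge>x0. c * g x \<le> f x \<and> f x \<le> C * g x"
proof -
  obtain K where K: "K > 0" "\<forall>\<Lambda>>1. \<exists>x1. \<forall>x\<ge>x1. \<forall>l\<in>{1..\<Lambda>}. f (l * x) / (l powr a * f x) \<le> K"
    using A unfolding Aok_def by blast
  obtain x1 where x1: "\<forall>x\<ge>x1. \<forall>l\<in>{1..exp 1}. f (l * x) / (l powr a * f x) \<le> K"
    using K(2) by (meson one_less_exp_iff zero_less_one)
  obtain D where D: "D > 0" "\<forall>\<Lambda>>1. \<exists>x1. \<forall>x\<ge>x1. \<forall>l\<in>{1..\<Lambda>}. f (l * x) / (l powr b * f x) \<ge> D"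
    using B unfolding Bok_def by blast
  obtain lam where lam: "lam > 1" "D * lam powr b \<ge> 2" using choose_lam[OF D(1) b] by blast
  obtain x2 where x2: "\<forall>x\<ge>x2. \<forall>l\<in>{1..lam}. f (l * x) / (l powr b * f x) \<ge> D"
    using D(2) lam(1) by blast
  define z where "z = max (max x1 x2) X0"
  have z: "z > 0" "z \<ge> x1" "z \<ge> x2" "z \<ge> X0" unfolding z_def using X0 by auto
  have upper: "f x \<le> K * exp 1 powr a * g x" if x: "x \<ge> exp 1 * z" for x
  proof -
    define y where "y = x / exp 1"
    have y: "y \<ge> z" unfolding y_def using x by (simp add: pos_le_divide_eq mult.commute)
    have xy: "x = exp 1 * y" unfolding y_def by simp
    have fy: "f y > 0" using fpos y z by auto
    have "f (exp 1 * y) / (exp 1 powr a * f y) \<le> K" using x1 y z by auto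
    hence s1: "f x \<le> K * (exp 1 powr a * f y)"
      using fy xy by (simp add: pos_divide_le_eq)
    have yx: "y \<le> x" using xy y z by (simp add: mult_le_cancel_right1)
    have e: "x / y = exp 1" using xy y z by simp
    have "g y + f y \<le> g x" using P1[rule_format, of y x] e yx y z by simp
    moreover have "g y \<ge> 0" using gnn y z by auto
    ultimately have "f y \<le> g x" by linarith
    hence "K * (exp 1 powr a * f y) \<le> K * (exp 1 powr a * g x)"
      using K by (intro mult_left_mono) auto
    thus ?thesis using s1 by simp
  qed
  have dbl: "f (lam * y) \<ge> 2 * f y" if y: "y \<ge> z" for y
  proof -
    have fy: "f y > 0" using fpos y z by auto
    have "f (lam * y) / (lam powr b * f y) \<ge> D" using x2 y z lam by auto
    hence "D * (lam powr b * f y) \<le> f (lam * y)"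
      using fy lam by (simp add: pos_le_divide_eq)
    moreover have "2 * f y \<le> D * lam powr b * f y" using lam fy by (intro mult_right_mono) auto
    ultimately show ?thesis by (simp add: mult.assoc)
  qed
  have fz: "f z > 0" using fpos z by auto
  define K0 where "K0 = g (lam * z) / f z"
  define Kc where "Kc = max K0 (2 * ln lam)"
  have lpos: "ln lam > 0" using lam by simp
  have Kc: "Kc > 0" "Kc \<ge> K0" "ln lam \<le> Kc / 2" unfolding Kc_def using lpos by auto
  have base: "g x \<le> Kc * f x" if "z \<le> x" "x \<le> lam * z" for x
  proof -
    have "g x \<le> g (lam * z)" using gmono that z by auto
    also have "\<dots> = K0 * f z" unfolding K0_def using fz by simp
    also have "\<dots> \<le> K0 * f x"
    proof -
      have "lam * z > 0" using lam z by simp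
      hence "g (lam * z) \<ge> 0" using gnn by blast
      hence "K0 \<ge> 0" unfolding K0_def using fz by simp
      moreover have "f z \<le> f x" using fmono that z by auto
      ultimately show ?thesis by (intro mult_left_mono)
    qed
    also have "\<dots> \<le> Kc * f x"
      using Kc fnn that z by (intro mult_right_mono) auto
    finally show ?thesis .
  qed
  have ind: "\<forall>x. z \<le> x \<longrightarrow> x \<le> lam ^ Suc n * z \<longrightarrow> g x \<le> Kc * f x" for n
  proof (induction n)
    case 0 then show ?case using base by simp
  next
    case (Suc n)
    show ?case
    proof (intro allI impI)
      fix x assume x: "z \<le> x" "x \<le> lam ^ Suc (Suc n) * z"
      show "g x \<le> Kc * f x"
      proof (cases "x \<le> lam * z")
        case True then show ?thesis using base x by simp
      next
        case False
        define y where "y = x / lam"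
        have xy: "x = lam * y" unfolding y_def using lam by simp
        have y: "y \<ge> z" unfolding y_def using False lam by (simp add: pos_le_divide_eq mult.commute)
        have lp0: "lam > 0" using lam by simp
        have eqp: "lam ^ Suc (Suc n) * z = (lam ^ Suc n * z) * lam" by (simp add: mult_ac)
        have y2: "y \<le> lam ^ Suc n * z" unfolding y_def
          using x(2) eqp by (simp only: pos_divide_le_eq[OF lp0])
        have IH: "g y \<le> Kc * f y" using Suc y y2 by blast
        have fx2: "2 * f y \<le> f x" using dbl y xy by simp
        have yx: "y \<le> x" using xy y z lam by (simp add: mult_le_cancel_right1)
        have e: "x / y = lam" using xy y z by simp
        have "g x \<le> g y + f x * ln lam" using P2[rule_format, of y x] e yx y z by simp
        moreover have "Kc * f y \<le> Kc * (f x / 2)" using fx2 Kc by (intro mult_left_mono) auto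
        moreover have "f x * ln lam \<le> f x * (Kc / 2)"
          using Kc fnn x z by (intro mult_left_mono) auto
        moreover have "Kc * (f x / 2) + f x * (Kc / 2) = Kc * f x" by (simp add: algebra_simps)
        ultimately show ?thesis using IH by linarith
      qed
    qed
  qed
  have lower: "g x \<le> Kc * f x" if x: "x \<ge> z" for x
  proof -
    obtain n where n: "x / z < lam ^ n" using real_arch_pow[OF lam(1)] by blast
    have "x < lam ^ n * z" using n z by (simp add: pos_divide_less_eq)
    also have "\<dots> \<le> lam ^ Suc n * z" using lam z by (intro mult_right_mono) auto
    finally have "x \<le> lam ^ Suc n * z" by simp
    thus ?thesis using ind[of n] x by blast
  qed
  have H: "\<forall>x\<ge>exp 1 * z. 1 / Kc * g x \<le> f x \<and> f x \<le> K * exp 1 powr a * g x"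
  proof (intro allI impI conjI)
    fix x assume x: "x \<ge> exp 1 * z"
    have "z \<le> exp 1 * z" using z by (simp add: mult_le_cancel_right1)
    hence xz: "x \<ge> z" using x by linarith
    show "f x \<le> K * exp 1 powr a * g x" using upper x by blast
    show "1 / Kc * g x \<le> f x"
    proof -
      have "g x / Kc \<le> f x" using lower[OF xz] Kc by (simp add: pos_divide_le_eq mult_ac)
      thus ?thesis by simp
    qed
  qed
  have p1: "1 / Kc > 0" using Kc by simp
  have p2: "K * exp 1 powr a > 0" using K by simp
  show ?thesis
    by (rule exI[of _ "1 / Kc"], rule conjI[OF p1], rule exI[of _ "K * exp 1 powr a"],
        rule conjI[OF p2], rule exI[of _ "exp 1 * z"], rule H)
qed

lemma I_iff_E:
  "(0 < Liminf at_top (\<lambda>t. ereal (f t / g t)) \<and>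
    Liminf at_top (\<lambda>t. ereal (f t / g t)) \<le> Limsup at_top (\<lambda>t. ereal (f t / g t)) \<and>
    Limsup at_top (\<lambda>t. ereal (f t / g t)) < \<infinity>)
   \<longleftrightarrow> (\<exists>c>0. \<exists>C>0. \<exists>x0. \<forall>x\<ge>x0. c * g x \<le> f x \<and> f x \<le> C * g x)"
proof
  assume h: "0 < Liminf at_top (\<lambda>t. ereal (f t / g t)) \<and>
    Liminf at_top (\<lambda>t. ereal (f t / g t)) \<le> Limsup at_top (\<lambda>t. ereal (f t / g t)) \<and>
    Limsup at_top (\<lambda>t. ereal (f t / g t)) < \<infinity>"
  obtain c where c: "0 < ereal c" "ereal c < Liminf at_top (\<lambda>t. ereal (f t / g t))"
    using ereal_dense2 h by blast
  obtain C where C: "Limsup at_top (\<lambda>t. ereal (f t / g t)) < ereal C"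
    using ereal_dense2 h by blast
  have "eventually (\<lambda>t. ereal c < ereal (f t / g t)) at_top" using c(2) by (rule less_LiminfD)
  then obtain x1 where x1: "\<And>t. t \<ge> x1 \<Longrightarrow> c < f t / g t"
    by (auto simp: eventually_at_top_linorder)
  have "eventually (\<lambda>t. ereal (f t / g t) < ereal C) at_top" using C by (rule Limsup_lessD)
  then obtain x2 where x2: "\<And>t. t \<ge> x2 \<Longrightarrow> f t / g t < C"
    by (auto simp: eventually_at_top_linorder)
  have cpos: "c > 0" using c(1) by simp
  have H: "\<forall>x\<ge>max (max x1 x2) X0. c * g x \<le> f x \<and> f x \<le> max C 1 * g x"
  proof (intro allI impI conjI)
    fix x assume x: "x \<ge> max (max x1 x2) X0"
    have gx: "g x > 0" using gpos x by auto
    have "c < f x / g x" using x1 x by auto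
    thus "c * g x \<le> f x" using gx by (simp add: pos_less_divide_eq less_imp_le)
    have "f x / g x < C" using x2 x by auto
    hence "f x \<le> C * g x" using gx by (simp add: pos_divide_less_eq less_imp_le)
    also have "\<dots> \<le> max C 1 * g x" using gx by (intro mult_right_mono) auto
    finally show "f x \<le> max C 1 * g x" .
  qed
  have "max C 1 > 0" by simp
  thus "\<exists>c>0. \<exists>C>0. \<exists>x0. \<forall>x\<ge>x0. c * g x \<le> f x \<and> f x \<le> C * g x"
    using H cpos by blast
next
  assume "\<exists>c>0. \<exists>C>0. \<exists>x0. \<forall>x\<ge>x0. c * g x \<le> f x \<and> f x \<le> C * g x"
  then obtain c C x0 where c: "c > 0" and C: "C > 0"
    and h: "\<forall>x\<ge>x0. c * g x \<le> f x \<and> f x \<le> C * g x" by blast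
  have ev: "\<forall>x\<ge>max x0 X0. c \<le> f x / g x \<and> f x / g x \<le> C"
  proof (intro allI impI conjI)
    fix x assume x: "x \<ge> max x0 X0"
    have gx: "g x > 0" using gpos x by auto
    show "c \<le> f x / g x" using h x gx by (simp add: pos_le_divide_eq)
    show "f x / g x \<le> C" using h x gx by (simp add: pos_divide_le_eq)
  qed
  have l: "ereal c \<le> Liminf at_top (\<lambda>t. ereal (f t / g t))"
    by (rule Liminf_bounded) (unfold eventually_at_top_linorder, rule exI[of _ "max x0 X0"], use ev in auto)
  have u: "Limsup at_top (\<lambda>t. ereal (f t / g t)) \<le> ereal C"
    by (rule Limsup_bounded) (unfold eventually_at_top_linorder, rule exI[of _ "max x0 X0"], use ev in auto)
  have m: "Liminf at_top (\<lambda>t. ereal (f t / g t)) \<le> Limsup at_top (\<lambda>t. ereal (f t / g t))"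
    by (rule Liminf_le_Limsup) simp
  show "0 < Liminf at_top (\<lambda>t. ereal (f t / g t)) \<and>
    Liminf at_top (\<lambda>t. ereal (f t / g t)) \<le> Limsup at_top (\<lambda>t. ereal (f t / g t)) \<and>
    Limsup at_top (\<lambda>t. ereal (f t / g t)) < \<infinity>"
  proof (intro conjI)
    have "0 < ereal c" using c by simp
    thus "0 < Liminf at_top (\<lambda>t. ereal (f t / g t))" using l by (rule order.strict_trans2)
    show "Liminf at_top (\<lambda>t. ereal (f t / g t)) \<le> Limsup at_top (\<lambda>t. ereal (f t / g t))" by (rule m)
    have "ereal C < \<infinity>" by simp
    with u show "Limsup at_top (\<lambda>t. ereal (f t / g t)) < \<infinity>" by (rule order.strict_trans1)
  qed
qed

end


theorem corollary4p5:
  fixes M :: "nat \<Rightarrow> real"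
  assumes "weight_sequence M"
  defines "m \<equiv> quotients M"
  defines "condI \<equiv>
      0 < Liminf at_top (\<lambda>t. ereal (nu_m m t / omegaM M t)) \<and>
      Liminf at_top (\<lambda>t. ereal (nu_m m t / omegaM M t))
        \<le> Limsup at_top (\<lambda>t. ereal (nu_m m t / omegaM M t)) \<and>
      Limsup at_top (\<lambda>t. ereal (nu_m m t / omegaM M t)) < \<infinity>"
  defines "condII \<equiv> beta_idx (nu_m m) > 0 \<and> alpha_idx (nu_m m) < \<infinity>"
  defines "condIII \<equiv> beta_idx (omegaM M) > 0 \<and> alpha_idx (omegaM M) < \<infinity>"
  shows "(condI \<longleftrightarrow> condII) \<and> (condII \<longleftrightarrow> condIII) \<and>
         (condI \<longrightarrow> beta_idx (omegaM M) = beta_idx (nu_m m) \<and>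
                   alpha_idx (omegaM M) = alpha_idx (nu_m m))"
proof -
  note ws = assms(1)
  have mq: "m = quotients M" using m_def by simp
  define f where "f = nu_m m"
  define g where "g = omegaM M"
  define X0 where "X0 = quotients M 0 + 1"
  have q0: "quotients M 0 > 0" by (rule q_pos[OF ws])
  have c1: "X0 > 0" unfolding X0_def using q0 by simp
  have c2: "\<forall>x\<ge>X0. f x > 0"
  proof (intro allI impI)
    fix x assume "x \<ge> X0"
    hence "x \<ge> quotients M 0" unfolding X0_def by simp
    hence "nu_m (quotients M) x \<ge> 1" by (rule nu_ge1[OF ws])
    thus "f x > 0" unfolding f_def mq by simp
  qed
  have c3: "\<forall>x\<ge>X0. g x > 0"
  proof (intro allI impI)
    fix x assume "x \<ge> X0"
    hence "x > quotients M 0" unfolding X0_def by simp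
    thus "g x > 0" unfolding g_def by (rule omega_pos[OF ws])
  qed
  have c4: "\<forall>x>0. f x \<ge> 0" unfolding f_def mq using nu_nonneg[OF ws] by blast
  have c5: "\<forall>x>0. g x \<ge> 0" unfolding g_def using omega_nonneg[OF ws] by blast
  have c6: "\<forall>x y. 0 < x \<longrightarrow> x \<le> y \<longrightarrow> f x \<le> f y" unfolding f_def mq using nu_mono[OF ws] by blast
  have c7: "\<forall>x y. 0 < x \<longrightarrow> x \<le> y \<longrightarrow> g x \<le> g y" unfolding g_def using omega_mono[OF ws] by blast
  have c8: "\<forall>x y. 0 < x \<longrightarrow> x \<le> y \<longrightarrow> g x + f x * ln (y / x) \<le> g y"
    unfolding f_def g_def mq using P1[OF ws] by blast
  have c9: "\<forall>x y. 0 < x \<longrightarrow> x \<le> y \<longrightarrow> g y \<le> g x + f y * ln (y / x)"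
    unfolding f_def g_def mq using P2[OF ws] by blast
  note ctx = c1 c2 c3 c4 c5 c6 c7 c8 c9
  define E where "E \<longleftrightarrow> (\<exists>c>0. \<exists>C>0. \<exists>x0. \<forall>x\<ge>x0. c * g x \<le> f x \<and> f x \<le> C * g x)"
  have I_E: "condI \<longleftrightarrow> E"
    unfolding condI_def E_def using I_iff_E[OF ctx] unfolding f_def g_def by simp
  have II: "condII \<longleftrightarrow> (\<exists>a. Aok f a) \<and> (\<exists>b>0. Bok f b)"
    unfolding condII_def alpha_fin beta_pos f_def by blast
  have III: "condIII \<longleftrightarrow> (\<exists>a. Aok g a) \<and> (\<exists>b>0. Bok g b)"
    unfolding condIII_def alpha_fin beta_pos g_def by blast
  have E_strong: "\<exists>c>0. \<exists>C>0. \<exists>x0. \<forall>x\<ge>x0. c * g x \<le> f x \<and> f x \<le> C * g x \<and> g x > 0" if "E"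
  proof -
    obtain c C x0 where cC: "c > 0" "C > 0" and h: "\<forall>x\<ge>x0. c * g x \<le> f x \<and> f x \<le> C * g x"
      using \<open>E\<close> unfolding E_def by blast
    have "\<forall>x\<ge>max x0 X0. c * g x \<le> f x \<and> f x \<le> C * g x \<and> g x > 0"
      using h c3 by auto
    thus ?thesis using cC by blast
  qed
  have E3: "condIII" if "E" using E_III[OF ctx] that unfolding III E_def by blast
  have E2: "condII" if e: "E"
  proof -
    obtain c C x0 where cC: "c > 0" "C > 0" and h: "\<forall>x\<ge>x0. c * g x \<le> f x \<and> f x \<le> C * g x \<and> g x > 0"
      using E_strong[OF e] by blast
    obtain a b where ab: "Aok g a" "Bok g b" "b > 0" using E3[OF e] unfolding III by blast
    have "Aok f a" by (rule transferA[OF cC h ab(1)])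
    moreover have "Bok f b" by (rule transferB[OF cC h ab(2)])
    ultimately show ?thesis unfolding II using ab(3) by blast
  qed
  have Eidx: "beta_idx g = beta_idx f \<and> alpha_idx g = alpha_idx f" if e: "E"
  proof -
    obtain c C x0 where cC: "c > 0" "C > 0" and h: "\<forall>x\<ge>x0. c * g x \<le> f x \<and> f x \<le> C * g x \<and> g x > 0"
      using E_strong[OF e] by blast
    show ?thesis using index_eq[OF cC h] by simp
  qed
  have III_E': "E" if e: "condIII"
  proof -
    obtain a b where "Aok g a" "Bok g b" "b > 0" using e unfolding III by blast
    thus ?thesis unfolding E_def by (rule III_E[OF ctx])
  qed
  have II_E': "E" if e: "condII"
  proof -
    obtain a b where "Aok f a" "Bok f b" "b > 0" using e unfolding II by blast
    thus ?thesis unfolding E_def by (rule II_E[OF ctx])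
  qed
  show ?thesis
    using I_E E2 E3 III_E' II_E' Eidx unfolding f_def g_def by blast
qed


end
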